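(* Let $n,k$ be positive integers with $k(k+1)\mid n$, and let $\mathcal C$ be the code of Construction B (see context). Then $\mathcal C$ is a uniform $\bigl(n,(k-1+\frac1k)n,k,k+1\bigr)$-BAC over $\mathbb{F}_q$ in which every bucket has length $(k-1+\frac1k)\frac{n}{k+1}$.
   Context: Fix a finite field $\mathbb{F}_q$; $[n]=\{1,\dots,n\}$. An $(n,N,k,m)$-batch array code (BAC) over $\mathbb{F}_q$ is an $\mathbb{F}_q$-linear map $\mathcal{C}:\mathbf x=(x_1,\dots,x_n)\in\mathbb{F}_q^n\mapsto(\mathbf c_1,\dots,\mathbf c_m)$ with buckets $\mathbf c_\ell\in\mathbb{F}_q^{N_\ell}$, $N_\ell\ge1$ independent of $\mathbf x$, $\sum_\ell N_\ell=N$, such that for every multiset $\{\{i_1,\dots,i_k\}\}$ of elements of $[n]$ there is a partition of $[m]$ into $k$ sets $R_1,\dots,R_k$ such that for each $j\in[k]$, $x_{i_j}$ is an $\mathbb{F}_q$-linear combination of values $f_\ell(\mathbf c_\ell)$, $\ell\in R_j$, for some linear functionals $f_\ell:\mathbb{F}_q^{N_\ell}\to\mathbb{F}_q$ (independent of $\mathbf x$). It is uniform if all $N_\ell$ are equal. Code $\mathcal C_0$: for $n_0$ with $k\mid n_0$ and $\mathbf z=(z_1,\dots,z_{n_0})$, let $P_\ell=\{(\ell-1)\frac{n_0}{k}+b:1\le b\le \frac{n_0}{k}\}$ for $\ell\in[k]$, let $\mathcal C_0(\mathbf z)=(\mathbf d_1,\dots,\mathbf d_{k+1})$ where $\mathbf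 d_\ell$ ($\ell\in[k]$) is the vector of entries $z_i$, $i\in[n_0]\setminus P_\ell$, and $\mathbf d_{k+1}=\sum_{t=0}^{k-1}(z_{t\frac{n_0}{k}+1},\dots,z_{t\frac{n_0}{k}+\frac{n_0}{k}})$. Construction B: set $n_0=\frac{n}{k+1}$; for $\mathbf x\in\mathbb{F}_q^n$ and $j\in[k+1]$ let $\mathbf x_j=(x_{(j-1)n_0+1},\dots,x_{jn_0})$ and $\mathcal C_0(\mathbf x_j)=(\mathbf c_{j,1},\dots,\mathbf c_{j,k+1})$; define $\mathcal C(\mathbf x)=(\mathbf c_1,\dots,\mathbf c_{k+1})$ with $\mathbf c_\ell=(\mathbf c_{1,\ell},\mathbf c_{2,\ell-1},\dots,\mathbf c_{k+1,\ell-k})$, second indices taken modulo $k+1$ with representatives in $[k+1]$. *)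

theory Defs
  imports Complex_Main
begin

text \<open>A message is a function x :: nat => 'a, of which only the
entries x 1, ..., x n (indices in [n] = {1..n}) are meaningful. An encoder with
m buckets is a function C :: (nat => 'a) => nat => 'a list; C x l is bucket l
(for l in {1..m}), a vector over the field written as a list (positions 0-based).\<close>

definition linear_encoder ::
  "nat \<Rightarrow> nat \<Rightarrow> (nat \<Rightarrow> nat) \<Rightarrow> ((nat \<Rightarrow> 'a::field) \<Rightarrow> nat \<Rightarrow> 'a list) \<Rightarrow> bool" where
  "linear_encoder n m Nl C \<longleftrightarrow>
     (\<forall>x. \<forall>l\<in>{1..m}. length (C x l) = Nl l) \<and>
     (\<forall>x y. (\<forall>i\<in>{1..n}. x i = y i) \<longrightarrow> (\<forall>l\<in>{1..m}. C x l = C y l)) \<and>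
     (\<forall>x y a b. \<forall>l\<in>{1..m}. \<forall>t<Nl l.
        C (\<lambda>i. a * x i + b * y i) l ! t = a * (C x l ! t) + b * (C y l ! t))"

definition is_partition_into :: "nat \<Rightarrow> nat \<Rightarrow> (nat \<Rightarrow> nat set) \<Rightarrow> bool" where
  "is_partition_into m k R \<longleftrightarrow>
     (\<Union>j\<in>{1..k}. R j) = {1..m} \<and>
     (\<forall>j\<in>{1..k}. R j \<noteq> {}) \<and>
     (\<forall>j\<in>{1..k}. \<forall>j'\<in>{1..k}. j \<noteq> j' \<longrightarrow> R j \<inter> R j' = {})"

text \<open>(n,N,k,m)-batch array code. The multiset {{i_1,...,i_k}} of elements
of [n] is given by the tuple (i 1, ..., i k); a linear functional f_l on
F^(N_l) is given by its coefficient vector f l.\<close>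
definition is_BAC ::
  "nat \<Rightarrow> nat \<Rightarrow> nat \<Rightarrow> nat \<Rightarrow> ((nat \<Rightarrow> 'a::field) \<Rightarrow> nat \<Rightarrow> 'a list) \<Rightarrow> bool" where
  "is_BAC n N k m C \<longleftrightarrow>
     (\<exists>Nl. (\<forall>l\<in>{1..m}. Nl l \<ge> 1) \<and> (\<Sum>l=1..m. Nl l) = N \<and>
        linear_encoder n m Nl C \<and>
        (\<forall>i::nat \<Rightarrow> nat. (\<forall>j\<in>{1..k}. i j \<in> {1..n}) \<longrightarrow>
           (\<exists>R. is_partition_into m k R \<and>
              (\<forall>j\<in>{1..k}. \<exists>(f::nat \<Rightarrow> nat \<Rightarrow> 'a) (g::nat \<Rightarrow> 'a).
                 \<forall>x. x (i j) = (\<Sum>l\<in>R j. g l * (\<Sum>t<Nl l. f l t * (C x l ! t)))))))"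

definition is_uniform_BAC ::
  "nat \<Rightarrow> nat \<Rightarrow> nat \<Rightarrow> nat \<Rightarrow> ((nat \<Rightarrow> 'a::field) \<Rightarrow> nat \<Rightarrow> 'a list) \<Rightarrow> bool" where
  "is_uniform_BAC n N k m C \<longleftrightarrow> is_BAC n N k m C \<and>
     (\<forall>x y. \<forall>l\<in>{1..m}. \<forall>l'\<in>{1..m}. length (C x l) = length (C y l'))"

definition P0 :: "nat \<Rightarrow> nat \<Rightarrow> nat \<Rightarrow> nat set" where
  "P0 n0 k l = {(l - 1) * (n0 div k) + b | b. 1 \<le> b \<and> b \<le> n0 div k}"

definition C0 :: "nat \<Rightarrow> nat \<Rightarrow> (nat \<Rightarrow> 'a::field) \<Rightarrow> nat \<Rightarrow> 'a list" where
  "C0 n0 k z l =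
     (if l \<le> k then map z (sorted_list_of_set ({1..n0} - P0 n0 k l))
      else map (\<lambda>b. \<Sum>t<k. z (t * (n0 div k) + b)) [1..<n0 div k + 1])"

definition mod_rep :: "int \<Rightarrow> nat \<Rightarrow> nat" where
  "mod_rep a m = nat ((a - 1) mod int m + 1)"

text \<open>Construction B: c_l = (c_{1,l}, c_{2,l-1}, ..., c_{k+1,l-k}).\<close>
definition constrB :: "nat \<Rightarrow> nat \<Rightarrow> (nat \<Rightarrow> 'a::field) \<Rightarrow> nat \<Rightarrow> 'a list" where
  "constrB k n x l =
     (let n0 = n div (k + 1) in
      concat (map (\<lambda>j. C0 n0 k (\<lambda>b. x ((j - 1) * n0 + b))
                          (mod_rep (int l - (int j - 1)) (k + 1)))
                  [1..<k + 2]))"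

end

theory Submission
  imports Defs
begin


lemma mr_range: assumes "m > 0" shows "mod_rep a m \<in> {1..m}"
proof -
  have "0 \<le> (a-1) mod int m" "(a-1) mod int m < int m" using assms by simp_all
  thus ?thesis unfolding mod_rep_def by auto
qed

lemma mr_dvd: assumes "m > 0" "mod_rep a m = mod_rep b m" shows "int m dvd (a - b)"
proof -
  have "0 \<le> (a-1) mod int m" "0 \<le> (b-1) mod int m" using assms by simp_all
  hence "(a-1) mod int m = (b-1) mod int m" using assms(2) unfolding mod_rep_def
    by (simp add: nat_eq_iff2)
  hence "int m dvd ((a-1) - (b-1))" by (simp add: mod_eq_dvd_iff)
  thus ?thesis by simp
qed

lemma small_dvd: assumes "int m dvd (int l - int l')" "l \<in> {1..m}" "l' \<in> {1..m}" shows "l = l'"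
proof -
  obtain q where q: "int l - int l' = int m * q" using assms(1) by (auto simp: dvd_def)
  have "\<bar>int m * q\<bar> < int m" using assms(2,3) q by auto
  hence "int m * \<bar>q\<bar> < int m * 1" by (simp add: abs_mult)
  hence "\<bar>q\<bar> < 1" using mult_less_cancel_left_pos[of "int m"] assms(2) by fastforce
  hence "q = 0" by simp
  thus ?thesis using q by simp
qed

lemma mr_inj:
  assumes "m > 0" "l \<in> {1..m}" "l' \<in> {1..m}"
    and "mod_rep (int l - d) m = mod_rep (int l' - d) m"
  shows "l = l'"
  using mr_dvd[OF assms(1,4)] small_dvd[OF _ assms(2,3)] by simp

lemma mr_inj2:
  assumes "m > 0" "j \<in> {1..m}" "j' \<in> {1..m}"
    and "mod_rep (d - (int j - 1)) m = mod_rep (d - (int j' - 1)) m"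
  shows "j = j'"
  using mr_dvd[OF assms(1,4)] small_dvd[OF _ assms(3,2)] by simp



lemma P0_eq: assumes "k > 0" shows "P0 (k*s) k c = {(c-1)*s+1..(c-1)*s+s}"
proof -
  have d: "k*s div k = s" using assms by simp
  show ?thesis unfolding P0_def d
  proof (intro set_eqI iffI)
    fix x assume "x \<in> {(c-1)*s+1..(c-1)*s+s}"
    thus "x \<in> {(c - 1) * s + b |b. 1 \<le> b \<and> b \<le> s}"
      by (intro CollectI exI[of _ "x - (c-1)*s"]) auto
  qed auto
qed

lemma P0_sub: assumes "k > 0" "1 \<le> c" "c \<le> k" shows "P0 (k*s) k c \<subseteq> {1..k*s}"
proof -
  have "(c-1)*s+s = c*s" using assms by (cases c) auto
  also have "\<dots> \<le> k*s" using assms by simp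
  finally show ?thesis unfolding P0_eq[OF assms(1)] by auto
qed

lemma C0_len_le: assumes "k > 0" "1 \<le> c" "c \<le> k"
  shows "length (C0 (k*s) k z c) = k*s - s"
proof -
  have "card ({1..k*s} - P0 (k*s) k c) = k*s - s"
    using P0_sub[OF assms] by (simp add: card_Diff_subset P0_eq[OF assms(1)])
  thus ?thesis unfolding C0_def using assms by simp
qed

lemma C0_len_gt: assumes "k > 0" "\<not> c \<le> k"
  shows "length (C0 (k*s) k z c) = s"
  unfolding C0_def using assms by simp

lemma C0_entry_le: assumes "k > 0" "1 \<le> c" "c \<le> k" "i \<in> {1..k*s} - P0 (k*s) k c"
  shows "\<exists>p < k*s - s. \<forall>z::nat\<Rightarrow>'a::field. C0 (k*s) k z c ! p = z i"
proof -
  let ?L = "sorted_list_of_set ({1..k*s} - P0 (k*s) k c)"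
  have "i \<in> set ?L" using assms(4) by simp
  then obtain p where p: "p < length ?L" "?L ! p = i" by (metis in_set_conv_nth)
  have "length ?L = k*s - s" using C0_len_le[OF assms(1-3)] assms unfolding C0_def by simp
  thus ?thesis using p assms unfolding C0_def by (intro exI[of _ p]) auto
qed

lemma C0_entry_gt: assumes "k > 0" "\<not> c \<le> k" "b \<in> {1..s}"
  shows "C0 (k*s) k z c ! (b-1) = (\<Sum>u<k. z (u*s+b))"
proof -
  have "[1..<s+1] ! (b-1) = b" using assms(3) by (subst nth_upt) auto
  moreover have "b - 1 < length [1..<s+1]" using assms(3) by auto
  ultimately show ?thesis unfolding C0_def using assms by (simp del: upt_Suc)
qed

lemma C0_entry_form: assumes "k > 0" "1 \<le> c" "p < length (C0 (k*s) k z0 c)"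
  shows "\<exists>I. set I \<subseteq> {1..k*s} \<and> (\<forall>z::nat\<Rightarrow>'a::field. C0 (k*s) k z c ! p = sum_list (map z I))"
proof (cases "c \<le> k")
  case True
  let ?L = "sorted_list_of_set ({1..k*s} - P0 (k*s) k c)"
  have pl: "p < length ?L" using assms True unfolding C0_def by simp
  hence "?L ! p \<in> {1..k*s}" using nth_mem[OF pl] by auto
  thus ?thesis using pl True unfolding C0_def
    by (intro exI[of _ "[?L ! p]"]) auto
next
  case False
  have ps: "p < s" using assms C0_len_gt[OF assms(1) False, of s z0] by simp
  have sub: "set (map (\<lambda>u. u*s + (p+1)) [0..<k]) \<subseteq> {1..k*s}"
  proof
    fix x assume "x \<in> set (map (\<lambda>u. u*s + (p+1)) [0..<k])"
    then obtain u where u: "u < k" "x = u*s + (p+1)" by auto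
    have "u*s + s \<le> k*s" using u(1) by (metis Suc_leI add.commute mult_Suc mult_le_mono1)
    thus "x \<in> {1..k*s}" using u ps by auto
  qed
  have e: "C0 (k*s) k z c ! p = (\<Sum>u<k. z (u*s+(p+1)))" for z :: "nat \<Rightarrow> 'a"
  proof -
    have "p+1 \<in> {1..s}" using ps by auto
    from C0_entry_gt[OF assms(1) False this, of z] show ?thesis by simp
  qed
  have e2: "sum_list (map z (map (\<lambda>u. u*s + (p+1)) [0..<k])) = (\<Sum>u<k. z (u*s+(p+1)))" for z :: "nat \<Rightarrow> 'a"
    unfolding map_map interv_sum_list_conv_sum_set_nat by (simp add: atLeast0LessThan)
  show ?thesis
    by (rule exI[of _ "map (\<lambda>u. u*s + (p+1)) [0..<k]"]) (use sub e e2 in auto)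
qed



lemma concat_nth_in:
  assumes "\<forall>x j. length (G x j) = len j" "j \<in> set js" "p < len j"
  shows "\<exists>t < sum_list (map len js). \<forall>x. concat (map (G x) js) ! t = G x j ! p"
  using assms(2)
proof (induction js)
  case Nil thus ?case by simp
next
  case (Cons a js)
  show ?case
  proof (cases "a = j")
    case True
    thus ?thesis using assms(1,3) by (intro exI[of _ p]) (auto simp: nth_append)
  next
    case False
    then obtain t where t: "t < sum_list (map len js)" "\<forall>x. concat (map (G x) js) ! t = G x j ! p"
      using Cons by auto
    show ?thesis using assms(1) t
      by (intro exI[of _ "len a + t"]) (auto simp: nth_append)
  qed
qed

lemma concat_nth_out:
  assumes "\<forall>x j. length (G x j) = len j" "t < sum_list (map len js)"
  shows "\<exists>j\<in>set js. \<exists>p < len j. \<forall>x. concat (map (G x) js) ! t = G x j ! p"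
  using assms(2)
proof (induction js arbitrary: t)
  case Nil thus ?case by simp
next
  case (Cons a js)
  show ?case
  proof (cases "t < len a")
    case True
    thus ?thesis using assms(1) by (auto simp: nth_append)
  next
    case False
    have "t - len a < sum_list (map len js)" using Cons.prems False by simp
    then obtain j p where jp: "j \<in> set js" "p < len j" "\<forall>x. concat (map (G x) js) ! (t - len a) = G x j ! p"
      using Cons.IH by blast
    show ?thesis using assms(1) jp False
      by (intro bexI[of _ j] exI[of _ p]) (auto simp: nth_append)
  qed
qed

definition cfun :: "nat \<Rightarrow> nat \<Rightarrow> nat \<Rightarrow> nat" where
  "cfun k l j = mod_rep (int l - (int j - 1)) (k + 1)"

definition lenC :: "nat \<Rightarrow> nat \<Rightarrow> nat \<Rightarrow> nat" where
  "lenC k s c = (if c \<le> k then k*s - s else s)"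

definition GB :: "nat \<Rightarrow> nat \<Rightarrow> nat \<Rightarrow> (nat \<Rightarrow> 'a::field) \<Rightarrow> nat \<Rightarrow> 'a list" where
  "GB k s l x j = C0 (k*s) k (\<lambda>b. x ((j-1)*(k*s)+b)) (cfun k l j)"

lemma cfun_range: "cfun k l j \<in> {1..k+1}"
  unfolding cfun_def using mr_range[of "k+1"] by simp

lemma constrB_eq: assumes "k > 0"
  shows "constrB k ((k+1)*(k*s)) x l = concat (map (GB k s l x) [1..<k+2])"
proof -
  have d: "(k+1)*(k*s) div (k+1) = k*s" by (rule nonzero_mult_div_cancel_left) simp
  show ?thesis unfolding constrB_def Let_def d GB_def cfun_def by simp
qed

lemma GB_len: assumes "k > 0" shows "length (GB k s l x j) = lenC k s (cfun k l j)"
  using cfun_range[of k l j] C0_len_le[OF assms] C0_len_gt[OF assms]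
  unfolding GB_def lenC_def by auto

lemma cfun_bij_j: assumes "k > 0" shows "bij_betw (cfun k l) {1..k+1} {1..k+1}"
proof -
  have inj: "inj_on (cfun k l) {1..k+1}"
    unfolding inj_on_def cfun_def using mr_inj2[of "k+1" _ _ "int l"] by auto
  have sub: "cfun k l ` {1..k+1} \<subseteq> {1..k+1}" using cfun_range by auto
  have "card (cfun k l ` {1..k+1}) = card {1..k+1::nat}" using card_image[OF inj] by simp
  hence "cfun k l ` {1..k+1} = {1..k+1}" using card_subset_eq[OF _ sub] by simp
  thus ?thesis using inj unfolding bij_betw_def by simp
qed

lemma cfun_bij_l: assumes "k > 0" shows "bij_betw (\<lambda>l. cfun k l j) {1..k+1} {1..k+1}"
proof -
  have inj: "inj_on (\<lambda>l. cfun k l j) {1..k+1}"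
    unfolding inj_on_def cfun_def using mr_inj[of "k+1" _ _ "int j - 1"] by auto
  have sub: "(\<lambda>l. cfun k l j) ` {1..k+1} \<subseteq> {1..k+1}" using cfun_range by auto
  have "card ((\<lambda>l. cfun k l j) ` {1..k+1}) = card {1..k+1::nat}" using card_image[OF inj] by simp
  hence "(\<lambda>l. cfun k l j) ` {1..k+1} = {1..k+1}" using card_subset_eq[OF _ sub] by simp
  thus ?thesis using inj unfolding bij_betw_def by simp
qed

lemma sum_lens: assumes "k > 0"
  shows "sum_list (map (\<lambda>j. lenC k s (cfun k l j)) [1..<k+2]) = k*(k*s - s) + s"
proof -
  have "sum_list (map (\<lambda>j. lenC k s (cfun k l j)) [1..<k+2]) = (\<Sum>j\<in>{1..k+1}. lenC k s (cfun k l j))"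
    unfolding interv_sum_list_conv_sum_set_nat by (rule sum.cong) auto
  also have "\<dots> = (\<Sum>c\<in>{1..k+1}. lenC k s c)"
    using sum.reindex_bij_betw[OF cfun_bij_j[OF assms, of l], of "lenC k s"] by simp
  also have "\<dots> = (\<Sum>c\<in>{1..k}. lenC k s c) + lenC k s (k+1)"
    by simp
  also have "\<dots> = k*(k*s - s) + s" by (simp add: lenC_def)
  finally show ?thesis .
qed

lemma constrB_len: assumes "k > 0"
  shows "length (constrB k ((k+1)*(k*s)) x l) = k*(k*s - s) + s"
proof -
  have "length (concat (map (GB k s l x) [1..<k+2])) = sum_list (map (\<lambda>j. lenC k s (cfun k l j)) [1..<k+2])"
    by (simp only: length_concat map_map comp_def GB_len[OF assms])
  thus ?thesis unfolding constrB_eq[OF assms] sum_lens[OF assms] .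
qed



lemma B_entry_in: assumes "k > 0" "j \<in> {1..k+1}" "p < lenC k s (cfun k l j)"
  shows "\<exists>t < k*(k*s - s) + s. \<forall>x::nat\<Rightarrow>'a::field. constrB k ((k+1)*(k*s)) x l ! t = GB k s l x j ! p"
proof -
  have "\<forall>x j. length (GB k s l (x::nat\<Rightarrow>'a) j) = lenC k s (cfun k l j)" by (intro allI) (rule GB_len[OF assms(1)])
  moreover have "j \<in> set [1..<k+2]" using assms(2) by (simp del: upt_Suc)
  ultimately obtain t where "t < sum_list (map (\<lambda>j. lenC k s (cfun k l j)) [1..<k+2])"
     "\<forall>x::nat\<Rightarrow>'a. concat (map (GB k s l x) [1..<k+2]) ! t = GB k s l x j ! p"
    using concat_nth_in[of "GB k s l" "\<lambda>j. lenC k s (cfun k l j)" j "[1..<k+2]" p] assms(3) by blast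
  thus ?thesis unfolding sum_lens[OF assms(1)] constrB_eq[OF assms(1)] by blast
qed

lemma sum_list_lin: "sum_list (map (\<lambda>i. a * x i + b * y i) I) = a * sum_list (map x I) + b * sum_list (map y I)"
  for a b :: "'a::field"
  by (induction I) (auto simp: algebra_simps)

lemma B_entry_form: assumes "k > 0" "t < k*(k*s - s) + s"
  shows "\<exists>I. set I \<subseteq> {1..(k+1)*(k*s)} \<and> (\<forall>x::nat\<Rightarrow>'a::field. constrB k ((k+1)*(k*s)) x l ! t = sum_list (map x I))"
proof -
  have "\<forall>x j. length (GB k s l (x::nat\<Rightarrow>'a) j) = lenC k s (cfun k l j)" by (intro allI) (rule GB_len[OF assms(1)])
  moreover have "t < sum_list (map (\<lambda>j. lenC k s (cfun k l j)) [1..<k+2])"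
    unfolding sum_lens[OF assms(1)] by (rule assms(2))
  ultimately obtain j p where jp0: "j \<in> set [1..<k+2]" "p < lenC k s (cfun k l j)"
     "\<forall>x::nat\<Rightarrow>'a. concat (map (GB k s l x) [1..<k+2]) ! t = GB k s l x j ! p"
    using concat_nth_out[of "GB k s l" "\<lambda>j. lenC k s (cfun k l j)" t "[1..<k+2]"] by blast
  have jp: "j \<in> {1..k+1}" "p < lenC k s (cfun k l j)"
     "\<forall>x::nat\<Rightarrow>'a. concat (map (GB k s l x) [1..<k+2]) ! t = GB k s l x j ! p"
    using jp0 by (auto simp del: upt_Suc)
  have c1: "1 \<le> cfun k l j" using cfun_range[of k l j] by simp
  have "p < length (C0 (k*s) k (\<lambda>_. 0::'a) (cfun k l j))"
    using jp(2) GB_len[OF assms(1), of s l "\<lambda>_. 0::'a" j] unfolding GB_def by simp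
  from C0_entry_form[OF assms(1) c1 this]
  obtain I0 where I0: "set I0 \<subseteq> {1..k*s}" "\<forall>z::nat\<Rightarrow>'a. C0 (k*s) k z (cfun k l j) ! p = sum_list (map z I0)"
    by blast
  let ?I = "map (\<lambda>b. (j-1)*(k*s)+b) I0"
  have "set ?I \<subseteq> {1..(k+1)*(k*s)}"
  proof
    fix y assume "y \<in> set ?I"
    then obtain b where b: "b \<in> {1..k*s}" "y = (j-1)*(k*s)+b" using I0(1) by auto
    have "y \<le> (j-1)*(k*s) + k*s" using b by simp
    also have "(j-1)*(k*s) + k*s = j*(k*s)" using jp(1) by (cases j) auto
    also have "\<dots> \<le> (k+1)*(k*s)" using jp(1) by (intro mult_le_mono1) auto
    finally have "y \<le> (k+1)*(k*s)" .
    moreover have "1 \<le> y" using b by simp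
    ultimately show "y \<in> {1..(k+1)*(k*s)}" by (simp only: atLeastAtMost_iff)
  qed
  moreover have "\<forall>x::nat\<Rightarrow>'a. constrB k ((k+1)*(k*s)) x l ! t = sum_list (map x ?I)"
    using jp(3) I0(2) unfolding constrB_eq[OF assms(1)] GB_def by (simp add: comp_def)
  ultimately show ?thesis by blast
qed

definition rd :: "nat \<Rightarrow> nat \<Rightarrow> nat \<Rightarrow> ((nat \<Rightarrow> 'a::field) \<Rightarrow> 'a) \<Rightarrow> bool" where
  "rd k s l \<phi> \<longleftrightarrow> (\<exists>f. \<forall>x. \<phi> x = (\<Sum>t<k*(k*s - s) + s. f t * constrB k ((k+1)*(k*s)) x l ! t))"

lemma rd_entry: assumes "t < k*(k*s - s) + s"
  shows "rd k s l (\<lambda>x. constrB k ((k+1)*(k*s)) x l ! t)"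
  unfolding rd_def
proof (rule exI[of _ "\<lambda>t'. if t' = t then 1 else 0"], intro allI)
  fix x :: "nat \<Rightarrow> 'a"
  let ?e = "\<lambda>t'. constrB k ((k+1)*(k*s)) x l ! t'"
  have "(\<Sum>t'<k*(k*s - s) + s. (if t' = t then 1 else 0) * ?e t') = (\<Sum>t'<k*(k*s - s) + s. if t' = t then ?e t' else 0)"
    by (rule sum.cong) auto
  also have "\<dots> = ?e t" using assms by (simp add: sum.delta)
  finally show "?e t = (\<Sum>t'<k*(k*s - s) + s. (if t' = t then 1 else 0) * ?e t')" by simp
qed

lemma rd_zero: "rd k s l (\<lambda>x. 0)"
  unfolding rd_def by (rule exI[of _ "\<lambda>_. 0"]) simp

lemma rd_add: assumes "rd k s l \<phi>" "rd k s l \<psi>" shows "rd k s l (\<lambda>x. \<phi> x + \<psi> x)"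
proof -
  obtain f g where f: "\<forall>x. \<phi> x = (\<Sum>t<k*(k*s - s) + s. f t * constrB k ((k+1)*(k*s)) x l ! t)"
    and g: "\<forall>x. \<psi> x = (\<Sum>t<k*(k*s - s) + s. g t * constrB k ((k+1)*(k*s)) x l ! t)"
    using assms unfolding rd_def by blast
  show ?thesis unfolding rd_def
    by (rule exI[of _ "\<lambda>t. f t + g t"]) (simp add: f g distrib_right sum.distrib)
qed

lemma rd_neg: assumes "rd k s l \<phi>" shows "rd k s l (\<lambda>x. - \<phi> x)"
proof -
  obtain f where f: "\<forall>x. \<phi> x = (\<Sum>t<k*(k*s - s) + s. f t * constrB k ((k+1)*(k*s)) x l ! t)"
    using assms unfolding rd_def by blast
  show ?thesis unfolding rd_def
    by (rule exI[of _ "\<lambda>t. - f t"]) (simp add: f sum_negf)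
qed

lemma rd_sum: assumes "finite A" "\<forall>u\<in>A. rd k s l (\<phi> u)" shows "rd k s l (\<lambda>x. \<Sum>u\<in>A. \<phi> u x)"
  using assms
proof (induction A rule: finite_induct)
  case empty thus ?case using rd_zero by simp
next
  case (insert a A)
  thus ?case using rd_add[of k s l "\<phi> a" "\<lambda>x. \<Sum>u\<in>A. \<phi> u x"] by simp
qed

lemma rd_GB: assumes "k > 0" "j \<in> {1..k+1}" "p < lenC k s (cfun k l j)"
  shows "rd k s l (\<lambda>x. GB k s l x j ! p)"
proof -
  obtain t where t: "t < k*(k*s - s) + s" "\<forall>x::nat\<Rightarrow>'a::field. constrB k ((k+1)*(k*s)) x l ! t = GB k s l x j ! p"
    using B_entry_in[OF assms] by blast
  show ?thesis using rd_entry[OF t(1), of l, where 'a='a] t(2) by simp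
qed

lemma R1: assumes "k > 0" "j \<in> {1..k+1}" "cfun k l j \<le> k" "i \<in> {1..k*s} - P0 (k*s) k (cfun k l j)"
  shows "rd k s l (\<lambda>x::nat\<Rightarrow>'a::field. x ((j-1)*(k*s) + i))"
proof -
  have c1: "1 \<le> cfun k l j" using cfun_range[of k l j] by simp
  obtain p where p: "p < k*s - s" "\<forall>z::nat\<Rightarrow>'a. C0 (k*s) k z (cfun k l j) ! p = z i"
    using C0_entry_le[OF assms(1) c1 assms(3,4)] by blast
  have "p < lenC k s (cfun k l j)" using p(1) assms(3) by (simp add: lenC_def)
  from rd_GB[OF assms(1,2) this, where 'a='a] show ?thesis using p(2) unfolding GB_def by simp
qed

lemma R2: assumes "k > 0" "j \<in> {1..k+1}" "\<not> cfun k l j \<le> k" "b \<in> {1..s}"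
  shows "rd k s l (\<lambda>x::nat\<Rightarrow>'a::field. \<Sum>u<k. x ((j-1)*(k*s) + (u*s + b)))"
proof -
  have bl: "b - 1 < lenC k s (cfun k l j)" using assms(3,4) by (auto simp add: lenC_def)
  have eq: "(\<lambda>x::nat\<Rightarrow>'a. GB k s l x j ! (b-1)) = (\<lambda>x. \<Sum>u<k. x ((j-1)*(k*s) + (u*s + b)))"
  proof
    fix x :: "nat \<Rightarrow> 'a"
    show "GB k s l x j ! (b-1) = (\<Sum>u<k. x ((j-1)*(k*s) + (u*s + b)))"
      unfolding GB_def by (rule C0_entry_gt[OF assms(1,3,4)])
  qed
  from rd_GB[OF assms(1,2) bl, where 'a='a] show ?thesis unfolding eq .
qed



lemma comb:
  assumes "finite V" "card V = m + 1" "m \<ge> 1" "\<forall>j\<in>{1..m}. finite (B j) \<and> card (B j) \<le> 2"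
  shows "\<exists>R. (\<Union>j\<in>{1..m}. R j) = V \<and> (\<forall>j\<in>{1..m}. R j \<noteq> {}) \<and>
     (\<forall>j\<in>{1..m}. \<forall>j'\<in>{1..m}. j \<noteq> j' \<longrightarrow> R j \<inter> R j' = {}) \<and>
     (\<forall>j\<in>{1..m}. R j - B j \<noteq> {} \<or> B j \<subseteq> R j)"
  using assms
proof (induction m arbitrary: V)
  case 0 thus ?case by simp
next
  case (Suc m)
  show ?case
  proof (cases "m = 0")
    case True
    have "R - B 1 \<noteq> {} \<or> B 1 \<subseteq> R" if "R = V" for R
    proof (cases "V \<subseteq> B 1")
      case True
      have fB: "finite (B 1)" "card (B 1) \<le> 2" using Suc.prems(4) \<open>m = 0\<close> by simp_all
      have "card V \<le> card (B 1)" using fB(1) True by (rule card_mono)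
      hence "card V = card (B 1)" using Suc.prems(2) fB(2) \<open>m = 0\<close> by linarith
      hence "V = B 1" using card_subset_eq[OF fB(1) True] by blast
      thus ?thesis using that by blast
    next
      case False thus ?thesis using that by auto
    qed
    moreover have "V \<noteq> {}" using Suc.prems(1,2) by auto
    ultimately show ?thesis using True by (intro exI[of _ "\<lambda>_. V"]) auto
  next
    case False
    have cB: "finite (B (Suc m))" "card (B (Suc m)) \<le> 2" using Suc.prems(4) by auto
    have "\<not> V \<subseteq> B (Suc m)"
    proof
      assume "V \<subseteq> B (Suc m)"
      hence "card V \<le> card (B (Suc m))" using cB by (intro card_mono) auto
      thus False using cB Suc.prems(2) False by simp
    qed
    then obtain v where v: "v \<in> V" "v \<notin> B (Suc m)" by auto
    have c1: "card (V - {v}) = m + 1" using Suc.prems(1,2) v(1) by simp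
    have c2: "\<forall>j\<in>{1..m}. finite (B j) \<and> card (B j) \<le> 2" using Suc.prems(4) by auto
    have c3: "finite (V - {v})" "1 \<le> m" using Suc.prems(1) False by auto
    obtain R where R: "(\<Union>j\<in>{1..m}. R j) = V - {v}" "\<forall>j\<in>{1..m}. R j \<noteq> {}"
      "\<forall>j\<in>{1..m}. \<forall>j'\<in>{1..m}. j \<noteq> j' \<longrightarrow> R j \<inter> R j' = {}"
      "\<forall>j\<in>{1..m}. R j - B j \<noteq> {} \<or> B j \<subseteq> R j"
      using Suc.IH[OF c3(1) c1 c3(2) c2] by blast
    define R' where "R' = R(Suc m := {v})"
    have sub: "\<forall>j\<in>{1..m}. R j \<subseteq> V - {v}" using R(1) by blast
    have ins: "{1..Suc m} = insert (Suc m) {1..m}" by auto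
    have "(\<Union>j\<in>{1..Suc m}. R' j) = V"
    proof -
      have e1: "(\<Union>j\<in>{1..Suc m}. R' j) = R' (Suc m) \<union> (\<Union>j\<in>{1..m}. R' j)" unfolding ins by simp
      have e2: "(\<Union>j\<in>{1..m}. R' j) = (\<Union>j\<in>{1..m}. R j)" unfolding R'_def by (intro SUP_cong) auto
      have e3: "R' (Suc m) = {v}" unfolding R'_def by simp
      show ?thesis unfolding e1 e2 e3 R(1) using v(1) by blast
    qed
    moreover have "\<forall>j\<in>{1..Suc m}. R' j \<noteq> {}" using R(2) unfolding R'_def ins by auto
    moreover have "\<forall>j\<in>{1..Suc m}. \<forall>j'\<in>{1..Suc m}. j \<noteq> j' \<longrightarrow> R' j \<inter> R' j' = {}"
    proof (intro ballI impI)
      fix j j' assume jj: "j \<in> {1..Suc m}" "j' \<in> {1..Suc m}" "j \<noteq> j'"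
      show "R' j \<inter> R' j' = {}"
      proof (cases "j = Suc m")
        case True
        hence "j' \<in> {1..m}" using jj by auto
        thus ?thesis using True jj(3) sub unfolding R'_def by auto
      next
        case F1: False
        hence j1: "j \<in> {1..m}" using jj by auto
        show ?thesis
        proof (cases "j' = Suc m")
          case True
          thus ?thesis using j1 F1 sub unfolding R'_def by auto
        next
          case False
          hence "j' \<in> {1..m}" using jj by auto
          thus ?thesis using j1 F1 False jj(3) R(3) unfolding R'_def by auto
        qed
      qed
    qed
    moreover have "\<forall>j\<in>{1..Suc m}. R' j - B j \<noteq> {} \<or> B j \<subseteq> R' j"
      using R(4) v(2) unfolding R'_def ins by auto
    ultimately show ?thesis by blast
  qed
qed



lemma rec_one:
  fixes C :: "'x \<Rightarrow> nat \<Rightarrow> 'a::field list"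
  assumes "finite S" "l0 \<in> S" "\<forall>x. \<phi> x = (\<Sum>t<M. f t * C x l0 ! t)"
  shows "\<exists>(F::nat \<Rightarrow> nat \<Rightarrow> 'a) (g::nat \<Rightarrow> 'a). \<forall>x. \<phi> x = (\<Sum>l\<in>S. g l * (\<Sum>t<M. F l t * C x l ! t))"
proof (intro exI allI)
  fix x
  let ?E = "\<lambda>l. (\<Sum>t<M. f t * C x l ! t)"
  have "(\<Sum>l\<in>S. (if l = l0 then 1 else 0) * ?E l) = (\<Sum>l\<in>S. if l = l0 then ?E l else 0)"
    by (rule sum.cong) auto
  also have "\<dots> = ?E l0" using assms(1,2) by (simp add: sum.delta)
  finally show "\<phi> x = (\<Sum>l\<in>S. (if l = l0 then 1 else 0) * (\<Sum>t<M. (\<lambda>_. f) l t * C x l ! t))"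
    using assms(3) by simp
qed

lemma rec_two:
  fixes C :: "'x \<Rightarrow> nat \<Rightarrow> 'a::field list"
  assumes "finite S" "l1 \<in> S" "l2 \<in> S" "l1 \<noteq> l2"
    "\<forall>x. \<phi>1 x = (\<Sum>t<M. f1 t * C x l1 ! t)" "\<forall>x. \<phi>2 x = (\<Sum>t<M. f2 t * C x l2 ! t)"
    "\<forall>x. \<phi> x = \<phi>2 x - \<phi>1 x"
  shows "\<exists>(F::nat \<Rightarrow> nat \<Rightarrow> 'a) (g::nat \<Rightarrow> 'a). \<forall>x. \<phi> x = (\<Sum>l\<in>S. g l * (\<Sum>t<M. F l t * C x l ! t))"
proof (intro exI allI)
  fix x
  let ?F = "\<lambda>l. if l = l1 then f1 else f2"
  let ?g = "\<lambda>l. if l = l2 then 1 else if l = l1 then -1 else (0::'a)"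
  let ?E = "\<lambda>l. (\<Sum>t<M. ?F l t * C x l ! t)"
  have "(\<Sum>l\<in>S. ?g l * ?E l) = (\<Sum>l\<in>S. (if l = l2 then ?E l else 0) + (if l = l1 then - ?E l else 0))"
    by (rule sum.cong) (use assms(4) in auto)
  also have "\<dots> = ?E l2 - ?E l1" using assms(1,2,3) by (simp add: sum.distrib sum.delta)
  also have "\<dots> = \<phi> x" using assms(4-7) by simp
  finally show "\<phi> x = (\<Sum>l\<in>S. ?g l * ?E l)" by simp
qed

lemma block_disj: fixes a b s y :: nat assumes "a \<noteq> b" "y \<in> {a*s+1..a*s+s}" shows "y \<notin> {b*s+1..b*s+s}"
proof (cases "a < b")
  case True
  have "a*s + s = (Suc a)*s" by simp
  also have "\<dots> \<le> b*s" using True by (intro mult_le_mono1) simp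
  finally show ?thesis using assms(2) by auto
next
  case False
  hence "b < a" using assms(1) by simp
  have "b*s + s = (Suc b)*s" by simp
  also have "\<dots> \<le> a*s" using \<open>b < a\<close> by (intro mult_le_mono1) simp
  finally show ?thesis using assms(2) by auto
qed



definition Bset :: "nat \<Rightarrow> nat \<Rightarrow> nat \<Rightarrow> nat set" where
  "Bset k s r = {l \<in> {1..k+1}. cfun k l ((r-1) div (k*s) + 1) = ((r-1) mod (k*s)) div s + 1
                               \<or> cfun k l ((r-1) div (k*s) + 1) = k+1}"

lemma Bset_card: assumes "k > 0" shows "finite (Bset k s r) \<and> card (Bset k s r) \<le> 2"
proof -
  let ?j = "(r-1) div (k*s) + 1"
  let ?t = "((r-1) mod (k*s)) div s + 1"
  have sub: "Bset k s r \<subseteq> {1..k+1}" unfolding Bset_def by auto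
  have inj: "inj_on (\<lambda>l. cfun k l ?j) (Bset k s r)"
    using bij_betw_imp_inj_on[OF cfun_bij_l[OF assms, of ?j]] sub by (rule inj_on_subset)
  have fin: "finite (Bset k s r)" using sub finite_subset by blast
  have "(\<lambda>l. cfun k l ?j) ` Bset k s r \<subseteq> {?t, k+1}" unfolding Bset_def by auto
  hence "card ((\<lambda>l. cfun k l ?j) ` Bset k s r) \<le> card {?t, k+1}" by (intro card_mono) auto
  also have "\<dots> \<le> 2" by (simp add: card_insert_le_m1)
  finally show ?thesis using card_image[OF inj] fin by simp
qed

lemma decomp:
  fixes k s r :: nat
  assumes "k > 0" "s > 0" "r \<in> {1..(k+1)*(k*s)}"
  defines "j \<equiv> (r-1) div (k*s) + 1" and "p \<equiv> (r-1) mod (k*s) + 1"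
    and "t \<equiv> ((r-1) mod (k*s)) div s + 1" and "b \<equiv> ((r-1) mod (k*s)) mod s + 1"
  shows "r = (j-1)*(k*s) + p" "j \<in> {1..k+1}" "p \<in> {1..k*s}" "p = (t-1)*s + b" "t \<in> {1..k}" "b \<in> {1..s}"
proof -
  have ks: "k*s > 0" by (metis assms(1,2) nat_0_less_mult_iff)
  have "(r-1) div (k*s) * (k*s) + (r-1) mod (k*s) = r - 1" by (rule div_mult_mod_eq)
  thus "r = (j-1)*(k*s) + p" unfolding j_def p_def using assms(3) by simp
  have "r - 1 < (k+1)*(k*s)" using assms(3) by auto
  hence "(r-1) div (k*s) < k+1" by (simp add: less_mult_imp_div_less)
  thus "j \<in> {1..k+1}" unfolding j_def by simp
  have "(r-1) mod (k*s) < k*s" using ks by simp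
  thus "p \<in> {1..k*s}" unfolding p_def by simp
  show "p = (t-1)*s + b" unfolding p_def t_def b_def by simp
  have "(r-1) mod (k*s) < k * s" using ks by simp
  hence "(r-1) mod (k*s) div s < k" by (rule less_mult_imp_div_less)
  thus "t \<in> {1..k}" unfolding t_def by simp
  have "(r-1) mod (k*s) mod s < s" using assms(2) by (rule mod_less_divisor)
  thus "b \<in> {1..s}" unfolding b_def by simp
qed

lemma rd_rec:
  assumes "finite S" "l0 \<in> S" "rd k s l0 (\<phi> :: (nat \<Rightarrow> 'a::field) \<Rightarrow> 'a)"
  shows "\<exists>(F::nat \<Rightarrow> nat \<Rightarrow> 'a) (g::nat \<Rightarrow> 'a). \<forall>x. \<phi> x = (\<Sum>l\<in>S. g l * (\<Sum>t<k*(k*s - s) + s. F l t * constrB k ((k+1)*(k*s)) x l ! t))"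
  using assms(3) unfolding rd_def using rec_one[OF assms(1,2)] by blast

lemma serve:
  assumes "k > 0" "s > 0" "r \<in> {1..(k+1)*(k*s)}" "S \<subseteq> {1..k+1}"
    "S - Bset k s r \<noteq> {} \<or> Bset k s r \<subseteq> S"
  shows "\<exists>(F::nat \<Rightarrow> nat \<Rightarrow> 'a) (g::nat \<Rightarrow> 'a). \<forall>x::nat \<Rightarrow> 'a::field. x r = (\<Sum>l\<in>S. g l * (\<Sum>t<k*(k*s - s) + s. F l t * constrB k ((k+1)*(k*s)) x l ! t))"
proof -
  define j where "j = (r-1) div (k*s) + 1"
  define p where "p = (r-1) mod (k*s) + 1"
  define t where "t = ((r-1) mod (k*s)) div s + 1"
  define b where "b = ((r-1) mod (k*s)) mod s + 1"
  note D = decomp[OF assms(1-3), folded j_def p_def t_def b_def]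
  have finS: "finite S" using assms(4) finite_subset by blast
  have Bdef: "Bset k s r = {l \<in> {1..k+1}. cfun k l j = t \<or> cfun k l j = k+1}"
    unfolding Bset_def j_def t_def by simp
  have P0t: "\<And>c. 1 \<le> c \<Longrightarrow> P0 (k*s) k c = {(c-1)*s+1..(c-1)*s+s}" using P0_eq[OF assms(1)] by simp
  have pblk: "p \<in> {(t-1)*s+1..(t-1)*s+s}" using D(4,6) by simp
  show ?thesis
  proof (cases "S - Bset k s r \<noteq> {}")
    case True
    then obtain l where l: "l \<in> S" "l \<notin> Bset k s r" by blast
    have l1: "l \<in> {1..k+1}" using l(1) assms(4) by blast
    let ?c = "cfun k l j"
    have cr: "?c \<in> {1..k+1}" by (rule cfun_range)
    have ct: "?c \<noteq> t" "?c \<noteq> k+1" using l l1 unfolding Bdef by auto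
    hence cle: "?c \<le> k" using cr by auto
    have Pc: "P0 (k*s) k ?c = {(?c-1)*s+1..(?c-1)*s+s}" using P0t cr by simp
    have "t - 1 \<noteq> ?c - 1" using ct(1) cr D(5) by auto
    hence "p \<notin> P0 (k*s) k ?c"
      unfolding Pc using block_disj[of "t-1" "?c - 1" p s] pblk by blast
    hence "p \<in> {1..k*s} - P0 (k*s) k ?c" using D(3) by simp
    from R1[OF assms(1) D(2) cle this, where 'a='a]
    have "rd k s l (\<lambda>x::nat\<Rightarrow>'a. x r)" using D(1) by simp
    from rd_rec[OF finS l(1) this] show ?thesis by blast
  next
    case False
    hence BS: "Bset k s r \<subseteq> S" using assms(5) by blast
    have surj: "(\<lambda>l. cfun k l j) ` {1..k+1} = {1..k+1}" using cfun_bij_l[OF assms(1), of j] by (simp add: bij_betw_def)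
    obtain l1 where l1: "l1 \<in> {1..k+1}" "cfun k l1 j = t" using surj D(5)
      by (metis (no_types, lifting) atLeastAtMost_iff imageE le_SucI Suc_eq_plus1)
    obtain l2 where l2: "l2 \<in> {1..k+1}" "cfun k l2 j = k+1" using surj
      by (metis (no_types, lifting) atLeastAtMost_iff imageE le_add2 order_refl)
    have inS: "l1 \<in> S" "l2 \<in> S" using BS l1 l2 unfolding Bdef by auto
    have ne: "l1 \<noteq> l2" using l1 l2 D(5) by auto
    let ?f = "\<lambda>u. (j-1)*(k*s) + (u*s + b)"
    have r2: "rd k s l2 (\<lambda>x::nat\<Rightarrow>'a. \<Sum>u<k. x (?f u))"
      using R2[OF assms(1) D(2) _ D(6), of l2] l2(2) by simp
    have t1: "t \<le> k" "1 \<le> t" using D(5) by auto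
    have r1: "rd k s l1 (\<lambda>x::nat\<Rightarrow>'a. \<Sum>u\<in>{..<k} - {t-1}. x (?f u))"
    proof (rule rd_sum)
      show "finite ({..<k} - {t-1})" by simp
      show "\<forall>u\<in>{..<k} - {t-1}. rd k s l1 (\<lambda>x::nat\<Rightarrow>'a. x (?f u))"
      proof
        fix u assume u: "u \<in> {..<k} - {t-1}"
        have "u*s + s = Suc u * s" by simp
        also have "\<dots> \<le> k*s" using u by (intro mult_le_mono1) auto
        finally have "u*s + b \<in> {1..k*s}" using D(6) by auto
        moreover have "u*s + b \<notin> P0 (k*s) k t"
          unfolding P0t[OF t1(2)] using block_disj[of u "t-1" "u*s+b" s] u D(6) by auto
        ultimately have "u*s + b \<in> {1..k*s} - P0 (k*s) k t" by simp
        thus "rd k s l1 (\<lambda>x::nat\<Rightarrow>'a. x (?f u))"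
          using R1[OF assms(1) D(2), of l1 "u*s+b", where 'a='a] l1(2) t1 by simp
      qed
    qed
    obtain f1 where f1: "\<forall>x::nat\<Rightarrow>'a. (\<Sum>u\<in>{..<k} - {t-1}. x (?f u)) = (\<Sum>t<k*(k*s - s) + s. f1 t * constrB k ((k+1)*(k*s)) x l1 ! t)"
      using r1 unfolding rd_def by blast
    obtain f2 where f2: "\<forall>x::nat\<Rightarrow>'a. (\<Sum>u<k. x (?f u)) = (\<Sum>t<k*(k*s - s) + s. f2 t * constrB k ((k+1)*(k*s)) x l2 ! t)"
      using r2 unfolding rd_def by blast
    have diff: "\<forall>x::nat\<Rightarrow>'a. x r = (\<Sum>u<k. x (?f u)) - (\<Sum>u\<in>{..<k} - {t-1}. x (?f u))"
    proof
      fix x :: "nat \<Rightarrow> 'a"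
      have "t - 1 \<in> {..<k}" using t1 by auto
      hence "(\<Sum>u<k. x (?f u)) = x (?f (t-1)) + (\<Sum>u\<in>{..<k} - {t-1}. x (?f u))"
        by (simp add: sum.remove)
      moreover have "?f (t-1) = r" using D(1,4) by simp
      ultimately show "x r = (\<Sum>u<k. x (?f u)) - (\<Sum>u\<in>{..<k} - {t-1}. x (?f u))" by simp
    qed
    show ?thesis by (rule rec_two[OF finS inS(1) inS(2) ne f1 f2 diff])
  qed
qed



theorem theorem4p4:
  fixes n k N L :: nat
  assumes "0 < n" and "0 < k" and "k * (k + 1) dvd n"
    and "real N = (real k - 1 + 1 / real k) * real n"
    and "real L = (real k - 1 + 1 / real k) * (real n / real (k + 1))"
  shows "is_uniform_BAC n N k (k + 1) (constrB k n :: (nat \<Rightarrow> 'a::{field,finite}) \<Rightarrow> nat \<Rightarrow> 'a list)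
         \<and> (\<forall>x :: nat \<Rightarrow> 'a. \<forall>l\<in>{1..k + 1}. length (constrB k n x l) = L)"
proof -
  obtain s where s: "n = k * (k+1) * s" using assms(3) by (auto simp: dvd_def)
  have n_eq: "n = (k+1)*(k*s)" using s by (simp add: algebra_simps)
  have spos: "s > 0" using assms(1) s by (cases s) auto
  define Lc where "Lc = k*(k*s - s) + s"
  have sle: "s \<le> k*s" using assms(2) by simp
  have rLc: "real Lc = real k * (real k * real s - real s) + real s"
    unfolding Lc_def using sle by (simp add: of_nat_diff)
  have kne: "real k \<noteq> 0" using assms(2) by simp
  have k1: "real (k+1) \<noteq> 0" by simp
  have nk: "real n / real (k+1) = real k * real s" unfolding n_eq of_nat_mult using k1
    by (rule nonzero_mult_div_cancel_left)
  have "real L = real Lc" unfolding assms(5) nk rLc using kne by (simp add: field_simps)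
  hence L_eq: "L = Lc" by (simp only: of_nat_eq_iff)
  have "real N = real ((k+1)*Lc)" unfolding assms(4) n_eq of_nat_mult rLc using kne
    by (simp add: field_simps)
  hence N_eq: "N = (k+1)*Lc" by (simp only: of_nat_eq_iff)
  have len: "\<And>(x::nat\<Rightarrow>'a) l. length (constrB k n x l) = Lc"
    unfolding n_eq Lc_def by (rule constrB_len[OF assms(2)])
  have lin: "linear_encoder n (k+1) (\<lambda>_. Lc) (constrB k n :: (nat \<Rightarrow> 'a) \<Rightarrow> nat \<Rightarrow> 'a list)"
    unfolding linear_encoder_def
  proof (intro conjI allI ballI impI)
    fix x :: "nat \<Rightarrow> 'a" and l
    show "length (constrB k n x l) = Lc" by (rule len)
  next
    fix x y :: "nat \<Rightarrow> 'a" and l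
    assume xy: "\<forall>i\<in>{1..n}. x i = y i"
    show "constrB k n x l = constrB k n y l"
    proof (rule nth_equalityI)
      show "length (constrB k n x l) = length (constrB k n y l)" using len by simp
      fix t assume "t < length (constrB k n x l)"
      hence "t < k*(k*s - s) + s" using len unfolding Lc_def by simp
      from B_entry_form[OF assms(2) this, of l, where 'a='a]
      obtain I where I: "set I \<subseteq> {1..n}" "\<forall>x::nat\<Rightarrow>'a. constrB k n x l ! t = sum_list (map x I)"
        unfolding n_eq by blast
      have m: "map x I = map y I" using I(1) xy by (intro map_cong) auto
      show "constrB k n x l ! t = constrB k n y l ! t" unfolding I(2)[rule_format] m ..
    qed
  next
    fix x y :: "nat \<Rightarrow> 'a" and a b :: 'a and l t
    assume "t < Lc"
    hence "t < k*(k*s - s) + s" unfolding Lc_def .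
    from B_entry_form[OF assms(2) this, of l, where 'a='a]
    obtain I where I: "\<forall>x::nat\<Rightarrow>'a. constrB k n x l ! t = sum_list (map x I)"
      unfolding n_eq by blast
    show "constrB k n (\<lambda>i. a * x i + b * y i) l ! t = a * (constrB k n x l ! t) + b * (constrB k n y l ! t)"
      unfolding I[rule_format] by (rule sum_list_lin)
  qed
  have batch: "\<exists>R. is_partition_into (k+1) k R \<and>
              (\<forall>j\<in>{1..k}. \<exists>(f::nat \<Rightarrow> nat \<Rightarrow> 'a) (g::nat \<Rightarrow> 'a).
                 \<forall>x. x (i j) = (\<Sum>l\<in>R j. g l * (\<Sum>t<(\<lambda>_. Lc) l. f l t * (constrB k n x l ! t))))"
    if H: "\<forall>j\<in>{1..k}. i j \<in> {1..n}" for i :: "nat \<Rightarrow> nat"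
  proof -
    have "\<forall>j\<in>{1..k}. finite (Bset k s (i j)) \<and> card (Bset k s (i j)) \<le> 2"
      using Bset_card[OF assms(2)] by blast
    from comb[of "{1..k+1}" k "\<lambda>j. Bset k s (i j)", OF _ _ _ this] assms(2)
    obtain R where R: "(\<Union>j\<in>{1..k}. R j) = {1..k+1}" "\<forall>j\<in>{1..k}. R j \<noteq> {}"
      "\<forall>j\<in>{1..k}. \<forall>j'\<in>{1..k}. j \<noteq> j' \<longrightarrow> R j \<inter> R j' = {}"
      "\<forall>j\<in>{1..k}. R j - Bset k s (i j) \<noteq> {} \<or> Bset k s (i j) \<subseteq> R j"
      by auto
    have part: "is_partition_into (k+1) k R" unfolding is_partition_into_def using R(1-3) by blast
    have "\<exists>(f::nat \<Rightarrow> nat \<Rightarrow> 'a) (g::nat \<Rightarrow> 'a).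
                 \<forall>x. x (i j) = (\<Sum>l\<in>R j. g l * (\<Sum>t<Lc. f l t * (constrB k n x l ! t)))"
      if j: "j \<in> {1..k}" for j
    proof -
      have "i j \<in> {1..(k+1)*(k*s)}" using H j n_eq by simp
      moreover have "R j \<subseteq> {1..k+1}" using R(1) j by blast
      ultimately show ?thesis using serve[OF assms(2) spos _ _ R(4)[rule_format, OF j], where 'a='a]
        unfolding Lc_def n_eq by blast
    qed
    thus ?thesis using part by auto
  qed
  have bac: "is_BAC n N k (k+1) (constrB k n :: (nat \<Rightarrow> 'a) \<Rightarrow> nat \<Rightarrow> 'a list)"
    unfolding is_BAC_def
  proof (rule exI[of _ "\<lambda>_. Lc"], intro conjI)
    show "\<forall>l\<in>{1..k+1}. 1 \<le> Lc" using spos unfolding Lc_def by simp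
    show "(\<Sum>l = 1..k + 1. Lc) = N" unfolding N_eq by simp
    show "linear_encoder n (k+1) (\<lambda>_. Lc) (constrB k n :: (nat \<Rightarrow> 'a) \<Rightarrow> nat \<Rightarrow> 'a list)" by (rule lin)
    show "\<forall>i. (\<forall>j\<in>{1..k}. i j \<in> {1..n}) \<longrightarrow> (\<exists>R. is_partition_into (k + 1) k R \<and>
          (\<forall>j\<in>{1..k}. \<exists>(f::nat \<Rightarrow> nat \<Rightarrow> 'a) (g::nat \<Rightarrow> 'a).
              \<forall>x. x (i j) = (\<Sum>l\<in>R j. g l * (\<Sum>t<(\<lambda>_. Lc) l. f l t * (constrB k n x l ! t)))))"
      using batch by blast
  qed
  show ?thesis unfolding is_uniform_BAC_def using bac len L_eq by simp
qed


end
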